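(* The special monoid $\Pi_2=\langle a,b,c\mid (ab^ic)^2=1\ (i\geq 1)\rangle$ has context-free word problem, and its group of units is not finitely generated.
   Context: For a monoid $M$ with finite generating set $A$, the word problem of $M$ with respect to $A$ is the language $\{u\#v^{\mathrm{rev}} \mid u,v\in A^\ast,\ u=_M v\}$, where $\#\notin A$ and $v^{\mathrm{rev}}$ is the reversal of $v$; $M$ has context-free word problem if this language is context-free. The group of units of $M$ is the set of elements having both a left and a right inverse. A monoid is special if it has a presentation in which all defining relations are of the form $w=1$. *)

theory Defs
  imports "HOL-Algebra.Generated_Groups"
begin

inductive_set pres_cong :: "('a list \<times> 'a list) set \<Rightarrow> ('a list \<times> 'a list) set"
  for R where
  base: "(l, r) \<in> R \<Longrightarrow> (u @ l @ v, u @ r @ v) \<in> pres_cong R"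
| refl: "(w, w) \<in> pres_cong R"
| sym: "(x, y) \<in> pres_cong R \<Longrightarrow> (y, x) \<in> pres_cong R"
| trans: "(x, y) \<in> pres_cong R \<Longrightarrow> (y, z) \<in> pres_cong R \<Longrightarrow> (x, z) \<in> pres_cong R"

definition pres_monoid :: "('a list \<times> 'a list) set \<Rightarrow> 'a list set monoid" where
  "pres_monoid R = \<lparr> carrier = UNIV // pres_cong R,
     mult = (\<lambda>X Y. pres_cong R `` {(SOME x. x \<in> X) @ (SOME y. y \<in> Y)}),
     one = pres_cong R `` {[]} \<rparr>"

definition cfg_step :: "(nat \<times> (nat + 't) list) set \<Rightarrow> ((nat + 't) list \<times> (nat + 't) list) set" where
  "cfg_step P = {(u @ [Inl A] @ v, u @ w @ v) | u v A w. (A, w) \<in> P}"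

definition context_free :: "'t list set \<Rightarrow> bool" where
  "context_free L \<longleftrightarrow> (\<exists>(P :: (nat \<times> (nat + 't) list) set) S. finite P \<and>
      L = {w. ([Inl S], map Inr w) \<in> (cfg_step P)\<^sup>*})"

datatype 'a wsym = Gen 'a | Hash

definition word_problem :: "('a list \<times> 'a list) set \<Rightarrow> 'a wsym list set" where
  "word_problem R = {map Gen u @ [Hash] @ rev (map Gen v) | u v. (u, v) \<in> pres_cong R}"

datatype abc = a | b | c

definition Pi2_rels :: "(abc list \<times> abc list) set" where
  "Pi2_rels = {(([a] @ replicate i b @ [c]) @ ([a] @ replicate i b @ [c]), []) | i. i \<ge> 1}"

end

theory Submission
  imports Defs
begin

abbreviation cg where "cg \<equiv> pres_cong Pi2_rels"

definition xw :: "nat \<Rightarrow> abc list" where "xw k = a # replicate k b @ [c]"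
definition rl :: "nat \<Rightarrow> abc list" where "rl k = xw k @ xw k"

lemma repl_eq: "x \<noteq> b \<Longrightarrow> y \<noteq> b \<Longrightarrow> replicate i b @ x # xs = replicate k b @ y # ys
   \<Longrightarrow> i = k \<and> x = y \<and> xs = ys"
proof (induction i arbitrary: k)
  case 0 then show ?case by (cases k) auto
next
  case (Suc i) then show ?case by (cases k) auto
qed

lemma xw_uniq: "p @ xw j = p' @ xw j' \<Longrightarrow> p = p' \<and> j = j'"
proof -
  assume h: "p @ xw j = p' @ xw j'"
  have "rev (p @ xw j) = rev (p' @ xw j')" using h by simp
  hence "replicate j b @ a # rev p = replicate j' b @ a # rev p'"
    by (simp add: xw_def)
  from repl_eq[OF _ _ this] show ?thesis by auto
qed

lemma rl_uniq: "p @ rl j = p' @ rl j' \<Longrightarrow> p = p' \<and> j = j'"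
  unfolding rl_def using xw_uniq
  by (metis append_assoc)

lemma Pi2_iff: "(l, r) \<in> Pi2_rels \<longleftrightarrow> (\<exists>i\<ge>1. l = rl i \<and> r = [])"
  by (auto simp: Pi2_rels_def rl_def xw_def)

lemma cong_app: "(x, x') \<in> pres_cong R \<Longrightarrow> (u @ x @ v, u @ x' @ v) \<in> pres_cong R"
proof (induction rule: pres_cong.induct)
  case (base l r u' v')
  then show ?case using pres_cong.base[of l r R "u@u'" "v'@v"] by simp
next
  case (refl w) then show ?case by (rule pres_cong.refl)
next
  case (sym x y) then show ?case by (blast intro: pres_cong.sym)
next
  case (trans x y z) then show ?case by (blast intro: pres_cong.trans)
qed

lemma cong_concat: "(x, x') \<in> pres_cong R \<Longrightarrow> (y, y') \<in> pres_cong R \<Longrightarrow> (x @ y, x' @ y') \<in> pres_cong R"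
  using cong_app[of x x' R "[]" y] cong_app[of y y' R x' "[]"] pres_cong.trans by fastforce

lemma cong_equiv: "equiv UNIV (pres_cong R)"
  unfolding equiv_def refl_on_def sym_def trans_def
  by (auto intro: pres_cong.refl pres_cong.sym pres_cong.trans)

lemma rl_cong: "1 \<le> k \<Longrightarrow> (u @ rl k @ v, u @ v) \<in> cg"
  using pres_cong.base[of "rl k" "[]" Pi2_rels u v] by (auto simp: Pi2_iff)

definition red :: "abc list \<Rightarrow> abc \<Rightarrow> abc list" where
  "red s y = (if \<exists>p j. 1 \<le> j \<and> s @ [y] = p @ rl j then (SOME p. \<exists>j. 1 \<le> j \<and> s @ [y] = p @ rl j) else s @ [y])"

definition nf :: "abc list \<Rightarrow> abc list" where "nf w = foldl red [] w"

lemma red_remove: "1 \<le> j \<Longrightarrow> s @ [y] = p @ rl j \<Longrightarrow> red s y = p"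
proof -
  assume h: "1 \<le> j" "s @ [y] = p @ rl j"
  have "(SOME p. \<exists>j. 1 \<le> j \<and> s @ [y] = p @ rl j) = p"
    by (rule someI2[of _ p]) (use h rl_uniq in metis)+
  thus ?thesis using h unfolding red_def by auto
qed

lemma rl_last: "rl j = butlast (rl j) @ [c]"
  by (simp add: rl_def xw_def butlast_append)

lemma red_noc: "y \<noteq> c \<Longrightarrow> red s y = s @ [y]"
  unfolding red_def
  by (metis rl_last append_assoc last_snoc)

lemma fold_noc: "c \<notin> set w \<Longrightarrow> foldl red s w = s @ w"
  by (induction w arbitrary: s) (auto simp: red_noc)

lemma fold_xw_rem: "1 \<le> k \<Longrightarrow> foldl red (p @ xw k) (xw k) = p"
proof -
  assume k: "1 \<le> k"
  have "foldl red (p @ xw k) (xw k) = red (foldl red (p @ xw k) (a # replicate k b)) c"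
    by (simp add: xw_def)
  also have "foldl red (p @ xw k) (a # replicate k b) = p @ xw k @ a # replicate k b"
    by (subst fold_noc) auto
  also have "red (p @ xw k @ a # replicate k b) c = p"
    by (rule red_remove[OF k]) (simp add: rl_def xw_def)
  finally show ?thesis .
qed

lemma fold_xw_add: "1 \<le> k \<Longrightarrow> (\<forall>p. s \<noteq> p @ xw k) \<Longrightarrow> foldl red s (xw k) = s @ xw k"
proof -
  assume k: "1 \<le> k" and np: "\<forall>p. s \<noteq> p @ xw k"
  have "foldl red s (xw k) = red (foldl red s (a # replicate k b)) c"
    by (simp add: xw_def)
  also have "foldl red s (a # replicate k b) = s @ a # replicate k b"
    by (subst fold_noc) auto
  also have "red (s @ a # replicate k b) c = s @ xw k"
  proof -
    have nm: "\<not> (\<exists>p j. 1 \<le> j \<and> (s @ a # replicate k b) @ [c] = p @ rl j)"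
    proof
      assume "\<exists>p j. 1 \<le> j \<and> (s @ a # replicate k b) @ [c] = p @ rl j"
      then obtain p j where "(s @ a # replicate k b) @ [c] = p @ rl j" by blast
      hence "s @ xw k = (p @ xw j) @ xw j" by (simp add: rl_def xw_def)
      hence "s = p @ xw j \<and> k = j" using xw_uniq by metis
      thus False using np by blast
    qed
    show ?thesis unfolding red_def by (subst if_not_P[OF nm]) (simp add: xw_def)
  qed
  finally show ?thesis .
qed

definition irr :: "abc list \<Rightarrow> bool" where
  "irr s = (\<not> (\<exists>p q j. 1 \<le> j \<and> s = p @ rl j @ q))"

lemma irr_red: "irr s \<Longrightarrow> irr (red s y)"
proof -
  assume i: "irr s"
  show ?thesis
  proof (cases "\<exists>p j. 1 \<le> j \<and> s @ [y] = p @ rl j")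
    case True
    then obtain p j where pj: "1 \<le> j" "s @ [y] = p @ rl j" by blast
    hence r: "red s y = p" by (rule red_remove)
    have "s = p @ butlast (rl j)" using pj(2) rl_last
      by (metis append_assoc butlast_snoc)
    thus ?thesis using i r unfolding irr_def by (metis append_assoc)
  next
    case False
    hence r: "red s y = s @ [y]" unfolding red_def by auto
    show ?thesis unfolding irr_def r
    proof
      assume "\<exists>p q j. 1 \<le> j \<and> s @ [y] = p @ rl j @ q"
      then obtain p q j where h: "1 \<le> j" "s @ [y] = p @ rl j @ q" by blast
      show False
      proof (cases "q = []")
        case True thus False using h False by auto
      next
        case qn: False
        hence "s = p @ rl j @ butlast q" using h(2)
          by (metis append_assoc butlast_append butlast_snoc)
        thus False using i h(1) unfolding irr_def by blast
      qed
    qed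
  qed
qed

lemma irr_fold: "irr s \<Longrightarrow> irr (foldl red s w)"
  by (induction w arbitrary: s) (auto simp: irr_red)

lemma irr_Nil: "irr []" by (simp add: irr_def rl_def xw_def)

lemma irr_nf: "irr (nf w)" unfolding nf_def by (rule irr_fold[OF irr_Nil])

lemma fold_rl: "irr s \<Longrightarrow> 1 \<le> k \<Longrightarrow> foldl red s (rl k) = s"
proof -
  assume i: "irr s" and k: "1 \<le> k"
  show ?thesis
  proof (cases "\<exists>p. s = p @ xw k")
    case True
    then obtain p where p: "s = p @ xw k" by blast
    have np: "\<forall>p'. p \<noteq> p' @ xw k"
    proof
      fix p' show "p \<noteq> p' @ xw k"
      proof
        assume "p = p' @ xw k"
        hence "s = p' @ rl k @ []" using p by (simp add: rl_def)
        thus False using i k unfolding irr_def by blast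
      qed
    qed
    have "foldl red s (rl k) = foldl red (foldl red (p @ xw k) (xw k)) (xw k)"
      by (simp add: rl_def p)
    also have "\<dots> = s" using fold_xw_rem[OF k] fold_xw_add[OF k np] p by simp
    finally show ?thesis .
  next
    case False
    have "foldl red s (rl k) = foldl red (foldl red s (xw k)) (xw k)"
      by (simp add: rl_def)
    also have "\<dots> = s" using fold_xw_add[OF k] False fold_xw_rem[OF k] by simp
    finally show ?thesis .
  qed
qed

lemma nf_app: "nf (u @ v) = foldl red (nf u) v"
  by (simp add: nf_def)

lemma nf_cong: "(u, v) \<in> cg \<Longrightarrow> nf u = nf v"
proof (induction rule: pres_cong.induct)
  case (base l r u v)
  then obtain i where "1 \<le> i" "l = rl i" "r = []" by (auto simp: Pi2_iff)
  thus ?case by (simp add: nf_app[of "u @ rl i" v, simplified] nf_app fold_rl irr_nf)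
qed auto

lemma red_cong: "(s @ [y], red s y) \<in> cg"
proof (cases "\<exists>p j. 1 \<le> j \<and> s @ [y] = p @ rl j")
  case True
  then obtain p j where pj: "1 \<le> j" "s @ [y] = p @ rl j" by blast
  show ?thesis using red_remove[OF pj] rl_cong[OF pj(1), of p "[]"] pj(2) by simp
next
  case False thus ?thesis unfolding red_def by (auto intro: pres_cong.refl)
qed

lemma fold_cong: "(s @ w, foldl red s w) \<in> cg"
proof (induction w arbitrary: s)
  case Nil thus ?case by (auto intro: pres_cong.refl)
next
  case (Cons y w)
  have "(s @ [y] @ w, red s y @ w) \<in> cg" using cong_app[OF red_cong[of s y], of "[]" w] by simp
  moreover have "(red s y @ w, foldl red (red s y) w) \<in> cg" by (rule Cons.IH)
  ultimately show ?case by (auto intro: pres_cong.trans)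
qed

lemma cong_nf: "(w, nf w) \<in> cg"
  using fold_cong[of "[]" w] by (simp add: nf_def)

lemma cong_iff: "(u, v) \<in> cg \<longleftrightarrow> nf u = nf v"
  using nf_cong cong_nf by (metis pres_cong.sym pres_cong.trans)

lemma nf_irr: "irr w \<Longrightarrow> nf w = w"
proof (induction w rule: rev_induct)
  case Nil thus ?case by (simp add: nf_def)
next
  case (snoc y w)
  have iw: "irr w" using snoc.prems unfolding irr_def by (metis append_assoc)
  have "\<not> (\<exists>p j. 1 \<le> j \<and> w @ [y] = p @ rl j)" using snoc.prems unfolding irr_def
    by (metis append_Nil2)
  hence "red w y = w @ [y]" unfolding red_def by auto
  thus ?case using snoc.IH[OF iw] by (simp add: nf_def)
qed


lemma fold_nf: "irr s \<Longrightarrow> foldl red s m = nf (s @ m)"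
  by (simp add: nf_app nf_irr)

lemma fold_repl: "irr s \<Longrightarrow> nf m = nf m' \<Longrightarrow> foldl red s m = foldl red s m'"
proof -
  assume i: "irr s" and e: "nf m = nf m'"
  have "(m, m') \<in> cg" using e cong_iff by blast
  hence "(s @ m, s @ m') \<in> cg" using cong_app[of m m' _ s "[]"] by simp
  thus ?thesis using i fold_nf cong_iff by metis
qed

lemma fold_D [simp]: "irr s \<Longrightarrow> nf e = [] \<Longrightarrow> foldl red s e = s"
  using fold_repl[of s e "[]"] by (simp add: nf_def)

declare irr_Nil [simp] irr_red [simp] irr_fold [simp]

definition kw :: "nat \<Rightarrow> abc list" where "kw j = replicate j b @ [c, a] @ replicate j b"

lemma kw_Suc: "kw (Suc j) = b # kw j @ [b]"
  by (simp add: kw_def replicate_append_same)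

lemma a_kw_c: "a # kw j @ [c] = rl j"
  by (simp add: kw_def rl_def xw_def)

definition Pg :: "(nat \<times> (nat + abc wsym) list) set" where
"Pg = {(0,[Inr Hash]), (0,[Inr (Gen a), Inl 0, Inr (Gen a)]), (0,[Inr (Gen b), Inl 0, Inr (Gen b)]),
 (0,[Inr (Gen c), Inl 0, Inr (Gen c)]), (0,[Inl 1, Inl 0]), (0,[Inl 0, Inl 3]),
 (1,[]), (1,[Inl 1, Inl 1]), (1,[Inr (Gen a), Inl 2, Inr (Gen c)]),
 (2,[Inl 1, Inr (Gen b), Inl 1, Inr (Gen c), Inl 1, Inr (Gen a), Inl 1, Inr (Gen b), Inl 1]),
 (2,[Inl 1, Inr (Gen b), Inl 2, Inr (Gen b), Inl 1]),
 (3,[]), (3,[Inl 3, Inl 3]), (3,[Inr (Gen c), Inl 4, Inr (Gen a)]),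
 (4,[Inl 3, Inr (Gen b), Inl 3, Inr (Gen a), Inl 3, Inr (Gen c), Inl 3, Inr (Gen b), Inl 3]),
 (4,[Inl 3, Inr (Gen b), Inl 4, Inr (Gen b), Inl 3])}"

definition sem :: "nat \<Rightarrow> abc wsym list \<Rightarrow> bool" where
"sem A w = (if A = 0 then (\<exists>u v. w = map Gen u @ Hash # map Gen (rev v) \<and> nf u = nf v)
   else if A = 1 then (\<exists>e. w = map Gen e \<and> nf e = [])
   else if A = 2 then (\<exists>m j. 1 \<le> j \<and> w = map Gen m \<and> nf m = nf (kw j))
   else if A = 3 then (\<exists>e. w = map Gen e \<and> nf (rev e) = [])
   else if A = 4 then (\<exists>m j. 1 \<le> j \<and> w = map Gen m \<and> nf (rev m) = nf (kw j))
   else False)"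

fun sems :: "(nat + abc wsym) list \<Rightarrow> abc wsym list \<Rightarrow> bool" where
  "sems [] w = (w = [])"
| "sems (Inr t # al) w = (\<exists>w'. w = t # w' \<and> sems al w')"
| "sems (Inl A # al) w = (\<exists>w1 w2. w = w1 @ w2 \<and> sem A w1 \<and> sems al w2)"

lemma sems_app: "sems (al @ be) w \<longleftrightarrow> (\<exists>w1 w2. w = w1 @ w2 \<and> sems al w1 \<and> sems be w2)"
proof (induction al arbitrary: w)
  case Nil thus ?case by simp
next
  case (Cons x al)
  show ?case
  proof (cases x)
    case (Inl A)
    show ?thesis
    proof
      assume "sems ((x # al) @ be) w"
      then obtain w1 w2 where "w = w1 @ w2" "sem A w1" "sems (al @ be) w2" by (auto simp: Inl)
      then obtain v1 v2 where "w2 = v1 @ v2" "sems al v1" "sems be v2" using Cons.IH by blast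
      thus "\<exists>w1 w2. w = w1 @ w2 \<and> sems (x # al) w1 \<and> sems be w2"
        using \<open>w = w1 @ w2\<close> \<open>sem A w1\<close> by (intro exI[of _ "w1 @ v1"] exI[of _ v2]) (auto simp: Inl)
    next
      assume "\<exists>w1 w2. w = w1 @ w2 \<and> sems (x # al) w1 \<and> sems be w2"
      then obtain w1 w2 v1 v2 where "w = w1 @ w2" "w1 = v1 @ v2" "sem A v1" "sems al v2" "sems be w2"
        by (auto simp: Inl)
      hence "sems (al @ be) (v2 @ w2)" using Cons.IH by blast
      thus "sems ((x # al) @ be) w" using \<open>w = w1 @ w2\<close> \<open>w1 = v1 @ v2\<close> \<open>sem A v1\<close>
        by (auto simp: Inl)
    qed
  next
    case (Inr t)
    show ?thesis using Cons.IH by (auto simp: Inr) (metis append_Cons, blast)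
  qed
qed

lemma sems_term: "sems (map Inr w) w' \<longleftrightarrow> w' = w"
  by (induction w arbitrary: w') auto

lemma sem0: "sem 0 w = (\<exists>u v. w = map Gen u @ Hash # map Gen (rev v) \<and> nf u = nf v)"
  by (simp add: sem_def)

lemma sem1: "sem (Suc 0) w = (\<exists>e. w = map Gen e \<and> nf e = [])" by (simp add: sem_def)
lemma sem2: "sem 2 w = (\<exists>m j. 1 \<le> j \<and> w = map Gen m \<and> nf m = nf (kw j))" by (simp add: sem_def)
lemma sem3: "sem 3 w = (\<exists>e. w = map Gen e \<and> nf (rev e) = [])" by (simp add: sem_def)
lemma sem4: "sem 4 w = (\<exists>m j. 1 \<le> j \<and> w = map Gen m \<and> nf (rev m) = nf (kw j))" by (simp add: sem_def)

lemma wp_iff: "w \<in> word_problem Pi2_rels \<longleftrightarrow> sem 0 w"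
proof
  assume "w \<in> word_problem Pi2_rels"
  then obtain u v where w: "w = map Gen u @ [Hash] @ rev (map Gen v)" and uv: "(u, v) \<in> cg"
    unfolding word_problem_def by (simp only: mem_Collect_eq) blast
  have "nf u = nf v" using uv cong_iff by blast
  thus "sem 0 w" unfolding sem0 w rev_map by auto
next
  assume "sem 0 w"
  then obtain u v where w: "w = map Gen u @ Hash # map Gen (rev v)" and e: "nf u = nf v"
    unfolding sem0 by blast
  have "(u, v) \<in> cg" using e cong_iff by blast
  moreover have "w = map Gen u @ [Hash] @ rev (map Gen v)" using w by (simp add: rev_map)
  ultimately show "w \<in> word_problem Pi2_rels" unfolding word_problem_def by blast
qed

lemma nf_Nil [simp]: "nf [] = []" by (simp add: nf_def)
lemma nf_Cons: "nf (x # w) = foldl red (red [] x) w" by (simp add: nf_def)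
lemma nf_append: "nf (u @ v) = foldl red (nf u) v" by (simp add: nf_def)

lemma fold_repl_nf: "irr s \<Longrightarrow> nf m = nf m' \<Longrightarrow> foldl red s (m @ z) = foldl red (foldl red s m') z"
proof -
  assume "irr s" "nf m = nf m'"
  hence "foldl red s m = foldl red s m'" by (rule fold_repl)
  thus ?thesis by (simp only: foldl_append)
qed

lemmas nfs = nf_Cons nf_append

lemma ps_S_hash: "sems [Inr Hash] w \<Longrightarrow> sem 0 w"
  by (auto simp: sem0 sem1 sem2 sem3 sem4 intro!: exI[of _ "[]"])

lemma sem1': "sem 1 w = (\<exists>e. w = map Gen e \<and> nf e = [])" by (simp add: sem_def)

lemma ps_S_x: assumes "sems [Inr (Gen x), Inl 0, Inr (Gen x)] w" shows "sem 0 w"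
proof -
  from assms obtain u v where w: "w = Gen x # (map Gen u @ Hash # map Gen (rev v)) @ [Gen x]"
    and e: "nf u = nf v" by (auto simp: sem0)
  have e2: "nf (x # u) = nf (x # v)" using fold_repl[OF irr_red[OF irr_Nil] e] by (simp add: nf_Cons)
  have "w = map Gen (x # u) @ Hash # map Gen (rev (x # v))" using w by simp
  thus ?thesis using e2 unfolding sem0 by blast
qed

lemma ps_S_D: assumes "sems [Inl 1, Inl 0] w" shows "sem 0 w"
proof -
  from assms obtain e u v where w: "w = map Gen e @ (map Gen u @ Hash # map Gen (rev v))"
    and e: "nf u = nf v" "nf e = []" by (auto simp: sem0 sem1)
  have e2: "nf (e @ u) = nf v" using e by (simp add: nf_append nf_def[symmetric])
  have "w = map Gen (e @ u) @ Hash # map Gen (rev v)" using w by simp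
  thus ?thesis using e2 unfolding sem0 by blast
qed

lemma ps_S_R: assumes "sems [Inl 0, Inl 3] w" shows "sem 0 w"
proof -
  from assms obtain e u v where w: "w = (map Gen u @ Hash # map Gen (rev v)) @ map Gen e"
    and e: "nf u = nf v" "nf (rev e) = []" by (auto simp: sem0 sem3)
  have e2: "nf u = nf (rev e @ v)" using e by (simp add: nf_append nf_def[symmetric])
  have "w = map Gen u @ Hash # map Gen (rev (rev e @ v))" using w by simp
  thus ?thesis using e2 unfolding sem0 by blast
qed

lemma ps_D1: "sems [] w \<Longrightarrow> sem 1 w" by (auto simp: sem1 sem1')
lemma ps_D2: assumes "sems [Inl 1, Inl 1] w" shows "sem 1 w"
proof -
  from assms obtain e1 e2 where w: "w = map Gen e1 @ map Gen e2" and e: "nf e1 = []" "nf e2 = []"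
    by (auto simp: sem1)
  have "nf (e1 @ e2) = []" using e by (simp add: nfs)
  moreover have "w = map Gen (e1 @ e2)" using w by simp
  ultimately show ?thesis unfolding sem1' by blast
qed
lemma ps_D3: assumes "sems [Inr (Gen a), Inl 2, Inr (Gen c)] w" shows "sem 1 w"
proof -
  from assms obtain m j where w: "w = Gen a # map Gen m @ [Gen c]" and e: "1 \<le> j" "nf m = nf (kw j)"
    by (auto simp: sem2)
  have f: "foldl red (red [] a) m = foldl red (red [] a) (kw j)" by (rule fold_repl) (simp_all add: e)
  have "nf (a # m @ [c]) = nf (a # kw j @ [c])" by (simp add: nf_Cons f)
  also have "\<dots> = []" using e(1) by (simp add: a_kw_c nf_def fold_rl)
  finally have "nf (a # m @ [c]) = []" .
  moreover have "w = map Gen (a # m @ [c])" using w by simp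
  ultimately show ?thesis unfolding sem1' by blast
qed

lemma ps_K1: assumes "sems [Inl 1, Inr (Gen b), Inl 1, Inr (Gen c), Inl 1, Inr (Gen a), Inl 1, Inr (Gen b), Inl 1] w"
  shows "sem 2 w"
proof -
  from assms obtain e1 e2 e3 e4 e5 where
    w: "w = map Gen (e1 @ b # e2 @ c # e3 @ a # e4 @ b # e5)" and
    e: "nf e1 = []" "nf e2 = []" "nf e3 = []" "nf e4 = []" "nf e5 = []"
    by (auto simp: sem1)
  have "nf (e1 @ b # e2 @ c # e3 @ a # e4 @ b # e5) = nf (kw 1)"
    using e by (simp add: nfs kw_def)
  thus ?thesis using w unfolding sem2 by (blast intro: le_refl)
qed

lemma ps_K2: assumes "sems [Inl 1, Inr (Gen b), Inl 2, Inr (Gen b), Inl 1] w"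
  shows "sem 2 w"
proof -
  from assms obtain e1 m e2 j where
    w: "w = map Gen (e1 @ b # m @ b # e2)" and
    e: "nf e1 = []" "nf e2 = []" "1 \<le> j" "nf m = nf (kw j)"
    by (auto simp: sem1 sem2)
  have f: "foldl red (red [] b) m = foldl red (red [] b) (kw j)" by (rule fold_repl) (simp_all add: e)
  have "nf (e1 @ b # m @ b # e2) = nf (kw (Suc j))"
    using e f by (simp add: nfs kw_Suc)
  thus ?thesis using w e(3) le_SucI[OF e(3)] unfolding sem2 by blast
qed

lemma ps_R1: "sems [] w \<Longrightarrow> sem 3 w" by (auto simp: sem3)
lemma ps_R2: assumes "sems [Inl 3, Inl 3] w" shows "sem 3 w"
proof -
  from assms obtain e1 e2 where w: "w = map Gen e1 @ map Gen e2" and e: "nf (rev e1) = []" "nf (rev e2) = []"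
    by (auto simp: sem3)
  have "nf (rev (e1 @ e2)) = []" using e by (simp add: nfs)
  moreover have "w = map Gen (e1 @ e2)" using w by simp
  ultimately show ?thesis unfolding sem3 by blast
qed
lemma ps_R3: assumes "sems [Inr (Gen c), Inl 4, Inr (Gen a)] w" shows "sem 3 w"
proof -
  from assms obtain m j where w: "w = Gen c # map Gen m @ [Gen a]" and e: "1 \<le> j" "nf (rev m) = nf (kw j)"
    by (auto simp: sem4)
  have f: "foldl red (red [] a) (rev m) = foldl red (red [] a) (kw j)" by (rule fold_repl) (simp_all add: e)
  have "nf (rev (c # m @ [a])) = nf (a # kw j @ [c])" by (simp add: nf_Cons f)
  also have "\<dots> = []" using e(1) by (simp add: a_kw_c nf_def fold_rl)
  finally have "nf (rev (c # m @ [a])) = []" .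
  moreover have "w = map Gen (c # m @ [a])" using w by simp
  ultimately show ?thesis unfolding sem3 by blast
qed

lemma ps_N1: assumes "sems [Inl 3, Inr (Gen b), Inl 3, Inr (Gen a), Inl 3, Inr (Gen c), Inl 3, Inr (Gen b), Inl 3] w"
  shows "sem 4 w"
proof -
  from assms obtain e1 e2 e3 e4 e5 where
    w: "w = map Gen (e1 @ b # e2 @ a # e3 @ c # e4 @ b # e5)" and
    e: "nf (rev e1) = []" "nf (rev e2) = []" "nf (rev e3) = []" "nf (rev e4) = []" "nf (rev e5) = []"
    by (auto simp: sem3)
  have "nf (rev (e1 @ b # e2 @ a # e3 @ c # e4 @ b # e5)) = nf (kw 1)"
    using e by (simp add: nfs kw_def)
  thus ?thesis using w unfolding sem4 by (blast intro: le_refl)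
qed

lemma ps_N2: assumes "sems [Inl 3, Inr (Gen b), Inl 4, Inr (Gen b), Inl 3] w"
  shows "sem 4 w"
proof -
  from assms obtain e1 m e2 j where
    w: "w = map Gen (e1 @ b # m @ b # e2)" and
    e: "nf (rev e1) = []" "nf (rev e2) = []" "1 \<le> j" "nf (rev m) = nf (kw j)"
    by (auto simp: sem3 sem4)
  have f: "foldl red (red [] b) (rev m) = foldl red (red [] b) (kw j)" by (rule fold_repl) (simp_all add: e)
  have "nf (rev (e1 @ b # m @ b # e2)) = nf (kw (Suc j))"
    using e f by (simp add: nfs kw_Suc)
  thus ?thesis using w e(3) le_SucI[OF e(3)] unfolding sem4 by blast
qed

lemma prod_sound_all: "\<forall>p\<in>Pg. \<forall>w. sems (snd p) w \<longrightarrow> sem (fst p) w"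
  unfolding Pg_def
  apply (simp only: ball_simps fst_conv snd_conv)
  apply (intro conjI allI impI TrueI)
  apply (erule ps_S_hash)
  apply (erule ps_S_x)
  apply (erule ps_S_x)
  apply (erule ps_S_x)
  apply (erule ps_S_D)
  apply (erule ps_S_R)
  apply (erule ps_D1)
  apply (erule ps_D2)
  apply (erule ps_D3)
  apply (erule ps_K1)
  apply (erule ps_K2)
  apply (erule ps_R1)
  apply (erule ps_R2)
  apply (erule ps_R3)
  apply (erule ps_N1)
  apply (erule ps_N2)
  done

lemma prod_sound: assumes "(A, rhs) \<in> Pg" "sems rhs w" shows "sem A w"
  using prod_sound_all assms by fastforce

lemma sems_single: "sems [Inl A] w \<longleftrightarrow> sem A w" by simp

lemma step_sound: assumes "(al, be) \<in> cfg_step Pg" "sems be w" shows "sems al w"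
proof -
  from assms(1) obtain u v A r where al: "al = u @ [Inl A] @ v" and be: "be = u @ r @ v"
    and p: "(A, r) \<in> Pg" unfolding cfg_step_def by blast
  from assms(2) obtain w1 w' where h1: "w = w1 @ w'" "sems u w1" "sems (r @ v) w'"
    unfolding be sems_app by blast
  from h1(3) obtain w2 w3 where h2: "w' = w2 @ w3" "sems r w2" "sems v w3"
    unfolding sems_app by blast
  have "sem A w2" using prod_sound[OF p h2(2)] .
  hence "sems [Inl A] w2" by (simp only: sems_single)
  hence "sems ([Inl A] @ v) w'" unfolding sems_app using h2 by blast
  thus ?thesis unfolding al sems_app using h1 by blast
qed

lemma steps_sound: "(al, be) \<in> (cfg_step Pg)\<^sup>* \<Longrightarrow> sems be w \<Longrightarrow> sems al w"
  by (induction rule: rtrancl_induct) (auto intro: step_sound)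

lemma sound: "([Inl 0], map Inr w) \<in> (cfg_step Pg)\<^sup>* \<Longrightarrow> w \<in> word_problem Pi2_rels"
proof -
  assume "([Inl 0], map Inr w) \<in> (cfg_step Pg)\<^sup>*"
  hence "sems [Inl 0] w" using steps_sound sems_term by blast
  thus ?thesis using wp_iff by simp
qed

abbreviation der :: "nat \<Rightarrow> abc wsym list \<Rightarrow> bool" where
  "der A w \<equiv> ([Inl A], map Inr w) \<in> (cfg_step Pg)\<^sup>*"

definition dv :: "(nat + abc wsym) list \<Rightarrow> abc wsym list \<Rightarrow> bool" where
  "dv al w = ((al, map Inr w) \<in> (cfg_step Pg)\<^sup>*)"

lemma step_ctx: "(x, y) \<in> cfg_step P \<Longrightarrow> (u @ x @ v, u @ y @ v) \<in> cfg_step P"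
proof -
  assume "(x, y) \<in> cfg_step P"
  then obtain u' v' A w where "x = u' @ [Inl A] @ v'" "y = u' @ w @ v'" "(A, w) \<in> P"
    unfolding cfg_step_def by blast
  thus ?thesis unfolding cfg_step_def
    by (intro CollectI exI[of _ "u @ u'"] exI[of _ "v' @ v"] exI[of _ A] exI[of _ w]) simp
qed

lemma steps_ctx: "(x, y) \<in> (cfg_step P)\<^sup>* \<Longrightarrow> (u @ x @ v, u @ y @ v) \<in> (cfg_step P)\<^sup>*"
proof (induction rule: rtrancl_induct)
  case base thus ?case by simp
next
  case (step y z) thus ?case using step_ctx[of y z P u v]
    by (meson rtrancl.rtrancl_into_rtrancl)
qed

lemma steps_app: "(x, x') \<in> (cfg_step P)\<^sup>* \<Longrightarrow> (y, y') \<in> (cfg_step P)\<^sup>* \<Longrightarrow> (x @ y, x' @ y') \<in> (cfg_step P)\<^sup>*"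
  using steps_ctx[of x x' P "[]" y] steps_ctx[of y y' P x' "[]"] by (simp add: rtrancl_trans)

lemma dv_Nil: "dv [] []" by (simp add: dv_def)
lemma dv_T: "dv al w \<Longrightarrow> dv (Inr t # al) (t # w)"
  unfolding dv_def using steps_app[of "[Inr t]" "[Inr t]" Pg al "map Inr w"] by simp
lemma dv_T1: "dv [Inr t] [t]" by (simp add: dv_def)
lemma dv_N: "der A w1 \<Longrightarrow> dv al w2 \<Longrightarrow> dv (Inl A # al) (w1 @ w2)"
  unfolding dv_def using steps_app[of "[Inl A]" "map Inr w1" Pg al "map Inr w2"] by simp
lemma dv_N1: "der A w \<Longrightarrow> dv [Inl A] w" by (simp add: dv_def)

lemma der_prod: "(A, r) \<in> Pg \<Longrightarrow> dv r w \<Longrightarrow> der A w"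
proof -
  assume p: "(A, r) \<in> Pg" and d: "dv r w"
  have "([Inl A], r) \<in> cfg_step Pg" unfolding cfg_step_def using p
    by (intro CollectI exI[of _ "[]"] exI[of _ "[]"] exI[of _ A] exI[of _ r]) simp
  thus ?thesis using d unfolding dv_def by (meson converse_rtrancl_into_rtrancl)
qed

inductive Dl :: "abc list \<Rightarrow> bool" and Kl :: "abc list \<Rightarrow> bool" where
  D0: "Dl []"
| D2: "Dl e1 \<Longrightarrow> Dl e2 \<Longrightarrow> Dl (e1 @ e2)"
| D3: "Kl m \<Longrightarrow> Dl (a # m @ [c])"
| K1: "Dl e1 \<Longrightarrow> Dl e2 \<Longrightarrow> Dl e3 \<Longrightarrow> Dl e4 \<Longrightarrow> Dl e5 \<Longrightarrow> Kl (e1 @ b # e2 @ c # e3 @ a # e4 @ b # e5)"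
| K2: "Dl e1 \<Longrightarrow> Kl m \<Longrightarrow> Dl e2 \<Longrightarrow> Kl (e1 @ b # m @ b # e2)"

lemma DK_der:
  shows "Dl e \<Longrightarrow> der 1 (map Gen e) \<and> der 3 (map Gen (rev e))"
    and "Kl m \<Longrightarrow> der 2 (map Gen m) \<and> der 4 (map Gen (rev m))"
proof (induction e and m rule: Dl_Kl.inducts)
  case D0
  show ?case
    by (intro conjI der_prod[of 1 "[]"] der_prod[of 3 "[]"]) (simp_all add: Pg_def dv_Nil)
next
  case (D2 e1 e2)
  have "der 1 (map Gen e1 @ map Gen e2)"
    apply (rule der_prod[of 1 "[Inl 1, Inl 1]"], simp add: Pg_def)
    using D2 by (intro dv_N dv_N1) auto
  moreover have "der 3 (map Gen (rev e2) @ map Gen (rev e1))"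
    apply (rule der_prod[of 3 "[Inl 3, Inl 3]"], simp add: Pg_def)
    using D2 by (intro dv_N dv_N1) auto
  ultimately show ?case by simp
next
  case (D3 m)
  have "der 1 (Gen a # map Gen m @ [Gen c])"
    apply (rule der_prod[of 1 "[Inr (Gen a), Inl 2, Inr (Gen c)]"], simp add: Pg_def)
    using D3 by (intro dv_T dv_N dv_T1) auto
  moreover have "der 3 (Gen c # map Gen (rev m) @ [Gen a])"
    apply (rule der_prod[of 3 "[Inr (Gen c), Inl 4, Inr (Gen a)]"], simp add: Pg_def)
    using D3 by (intro dv_T dv_N dv_T1) auto
  ultimately show ?case by simp
next
  case (K1 e1 e2 e3 e4 e5)
  have "der 2 (map Gen e1 @ Gen b # map Gen e2 @ Gen c # map Gen e3 @ Gen a # map Gen e4 @ Gen b # map Gen e5)"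
    apply (rule der_prod[of 2 "[Inl 1, Inr (Gen b), Inl 1, Inr (Gen c), Inl 1, Inr (Gen a), Inl 1, Inr (Gen b), Inl 1]"], simp add: Pg_def)
    using K1 by (intro dv_T dv_N dv_N1) auto
  moreover have "der 4 (map Gen (rev e5) @ Gen b # map Gen (rev e4) @ Gen a # map Gen (rev e3) @ Gen c # map Gen (rev e2) @ Gen b # map Gen (rev e1))"
    apply (rule der_prod[of 4 "[Inl 3, Inr (Gen b), Inl 3, Inr (Gen a), Inl 3, Inr (Gen c), Inl 3, Inr (Gen b), Inl 3]"], simp add: Pg_def)
    using K1 by (intro dv_T dv_N dv_N1) auto
  ultimately show ?case by simp
next
  case (K2 e1 m e2)
  have "der 2 (map Gen e1 @ Gen b # map Gen m @ Gen b # map Gen e2)"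
    apply (rule der_prod[of 2 "[Inl 1, Inr (Gen b), Inl 2, Inr (Gen b), Inl 1]"], simp add: Pg_def)
    using K2 by (intro dv_T dv_N dv_N1) auto
  moreover have "der 4 (map Gen (rev e2) @ Gen b # map Gen (rev m) @ Gen b # map Gen (rev e1))"
    apply (rule der_prod[of 4 "[Inl 3, Inr (Gen b), Inl 4, Inr (Gen b), Inl 3]"], simp add: Pg_def)
    using K2 by (intro dv_T dv_N dv_N1) auto
  ultimately show ?case by simp
qed


inductive Pp :: "abc list \<Rightarrow> abc list \<Rightarrow> bool" where
  P0: "Pp [] []"
| P1: "Pp u v \<Longrightarrow> Pp (x # u) (x # v)"
| P2: "Dl e \<Longrightarrow> Pp u v \<Longrightarrow> Pp (e @ u) v"
| P3: "Dl e \<Longrightarrow> Pp u v \<Longrightarrow> Pp u (e @ v)"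

lemma Pp_der: "Pp u v \<Longrightarrow> der 0 (map Gen u @ Hash # map Gen (rev v))"
proof (induction rule: Pp.induct)
  case P0
  show ?case by (rule der_prod[of 0 "[Inr Hash]"]) (simp_all add: Pg_def dv_T1)
next
  case (P1 u v x)
  have m: "(0, [Inr (Gen x), Inl 0, Inr (Gen x)]) \<in> Pg" by (cases x) (simp_all add: Pg_def)
  have "der 0 (Gen x # (map Gen u @ Hash # map Gen (rev v)) @ [Gen x])"
    apply (rule der_prod[OF m])
    using P1 by (intro dv_T dv_N dv_T1) auto
  thus ?case by simp
next
  case (P2 e u v)
  have "der 0 (map Gen e @ (map Gen u @ Hash # map Gen (rev v)))"
    apply (rule der_prod[of 0 "[Inl 1, Inl 0]"], simp add: Pg_def)
    using P2 DK_der(1)[OF P2(1)] by (intro dv_N dv_N1) auto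
  thus ?case by simp
next
  case (P3 e u v)
  have "der 0 ((map Gen u @ Hash # map Gen (rev v)) @ map Gen (rev e))"
    apply (rule der_prod[of 0 "[Inl 0, Inl 3]"], simp add: Pg_def)
    using P3 DK_der(1)[OF P3(1)] by (intro dv_N dv_N1) auto
  thus ?case by simp
qed

lemma Pp_snoc: "Pp u v \<Longrightarrow> Pp (u @ [x]) (v @ [x])"
proof (induction rule: Pp.induct)
  case P0 show ?case using Pp.P1[OF Pp.P0] by simp
next
  case (P1 u v y) thus ?case using Pp.P1 by fastforce
next
  case (P2 e u v) thus ?case using Pp.P2 by fastforce
next
  case (P3 e u v) thus ?case using Pp.P3 by fastforce
qed

lemma Pp_appL: "Pp u v \<Longrightarrow> Dl e \<Longrightarrow> Pp (u @ e) v"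
proof (induction rule: Pp.induct)
  case P0 show ?case using Pp.P2[OF P0.prems Pp.P0] by simp
next
  case (P1 u v y) thus ?case using Pp.P1 by fastforce
next
  case (P2 e u v) thus ?case using Pp.P2 by fastforce
next
  case (P3 e u v) thus ?case using Pp.P3 by fastforce
qed

lemma Pp_appR: "Pp u v \<Longrightarrow> Dl e \<Longrightarrow> Pp u (v @ e)"
proof (induction rule: Pp.induct)
  case P0 show ?case using Pp.P3[OF P0.prems Pp.P0] by simp
next
  case (P1 u v y) thus ?case using Pp.P1 by fastforce
next
  case (P2 e u v) thus ?case using Pp.P2 by fastforce
next
  case (P3 e u v) thus ?case using Pp.P3 by fastforce
qed

inductive Il :: "abc list \<Rightarrow> abc list \<Rightarrow> bool" where
  I0: "Il [] []"
| I1: "Il y w \<Longrightarrow> Il (y @ [x]) (w @ [x])"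
| I2: "Il y w \<Longrightarrow> Dl e \<Longrightarrow> Il y (w @ e)"

lemma Il_Nil_inv: "Il y w \<Longrightarrow> y = [] \<Longrightarrow> Dl w"
  by (induction rule: Il.induct) (auto intro: Dl_Kl.intros)

lemma Il_snoc_inv: "Il y' w \<Longrightarrow> y' = y @ [x] \<Longrightarrow> \<exists>w' e. w = w' @ [x] @ e \<and> Il y w' \<and> Dl e"
proof (induction arbitrary: y x rule: Il.induct)
  case I0 thus ?case by simp
next
  case (I1 y0 w x0)
  hence e: "y0 = y" "x0 = x" by auto
  have "w @ [x0] = w @ [x] @ []" using e by simp
  thus ?case using I1(1) e Dl_Kl.D0 by blast
next
  case (I2 y0 w e)
  then obtain w' e' where "w = w' @ [x] @ e'" "Il y w'" "Dl e'" by blast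
  thus ?case using I2 by (intro exI[of _ w'] exI[of _ "e' @ e"]) (auto intro: Dl_Kl.intros)
qed

lemma Il_Pp: "Il y u \<Longrightarrow> Il y v \<Longrightarrow> Pp u v"
proof (induction arbitrary: v rule: Il.induct)
  case I0
  hence "Dl v" using Il_Nil_inv by blast
  thus ?case using Pp.P3[OF _ Pp.P0] by fastforce
next
  case (I1 y w x)
  then obtain v' e where "v = v' @ [x] @ e" "Il y v'" "Dl e" using Il_snoc_inv by blast
  thus ?case using I1 Pp_snoc Pp_appR by fastforce
next
  case (I2 y w e) thus ?case using Pp_appL by blast
qed

lemma Il_split: "Il y w \<Longrightarrow> y = y1 @ y2 \<Longrightarrow> \<exists>w1 w2. w = w1 @ w2 \<and> Il y1 w1 \<and> Il y2 w2"
proof (induction arbitrary: y2 rule: Il.induct)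
  case I0 thus ?case by (auto intro: Il.I0)
next
  case (I1 y w x)
  show ?case
  proof (cases "y2 = []")
    case True
    hence "y1 = y @ [x]" using I1(3) by simp
    hence "Il y1 (w @ [x])" using Il.I1[OF I1(1)] by simp
    moreover have "w @ [x] = (w @ [x]) @ []" by simp
    ultimately show ?thesis using True Il.I0 by blast
  next
    case False
    then obtain z x' where z0: "y2 = z @ [x']" by (cases y2 rule: rev_exhaust) auto
    hence "y @ [x] = (y1 @ z) @ [x']" using I1(3) by simp
    hence "y = y1 @ z" "x' = x" by auto
    hence z: "y2 = z @ [x]" "y = y1 @ z" using z0 by auto
    then obtain w1 w2 where h: "w = w1 @ w2" "Il y1 w1" "Il z w2" using I1 by blast
    have "Il y2 (w2 @ [x])" using Il.I1[OF h(3)] z by simp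
    moreover have "w @ [x] = w1 @ (w2 @ [x])" using h by simp
    ultimately show ?thesis using h(2) by blast
  qed
next
  case (I2 y w e)
  then obtain w1 w2 where h: "w = w1 @ w2" "Il y1 w1" "Il y2 w2" by blast
  have "Il y2 (w2 @ e)" using Il.I2[OF h(3) I2(2)] .
  moreover have "w @ e = w1 @ (w2 @ e)" using h by simp
  ultimately show ?case using h(2) by blast
qed

lemma Il_DlL: "Il y w \<Longrightarrow> Dl e \<Longrightarrow> Il y (e @ w)"
proof (induction rule: Il.induct)
  case I0 thus ?case using Il.I2[OF Il.I0] by simp
next
  case (I1 y w x) thus ?case using Il.I1[of y "e @ w" x] by simp
next
  case (I2 y w e') thus ?case using Il.I2[of y "e @ w" e'] by simp
qed

lemma Il_single: "Il [x] w \<Longrightarrow> \<exists>e1 e2. w = e1 @ x # e2 \<and> Dl e1 \<and> Dl e2"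
proof -
  assume "Il [x] w"
  then obtain w' e where "w = w' @ [x] @ e" "Il [] w'" "Dl e" using Il_snoc_inv[of "[x]" w "[]" x] by auto
  thus ?thesis using Il_Nil_inv by auto
qed


lemma Il_KB: "Il (replicate (Suc k) b) w \<Longrightarrow> Il (replicate (Suc k) b) w' \<Longrightarrow> Dl d \<Longrightarrow> Kl (w @ c # d @ a # w')"
proof (induction k arbitrary: w w')
  case 0
  have "Il [b] w" "Il [b] w'" using 0(1,2) by simp_all
  then obtain e1 e2 e4 e5 where 1: "w = e1 @ b # e2" "Dl e1" "Dl e2"
    and 2: "w' = e4 @ b # e5" "Dl e4" "Dl e5" using Il_single by meson
  have "Kl (e1 @ b # e2 @ c # d @ a # e4 @ b # e5)" using 1 2 0(3) by (intro Dl_Kl.K1)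
  thus ?case using 1 2 by simp
next
  case (Suc k)
  have "replicate (Suc (Suc k)) b = [b] @ replicate (Suc k) b" by simp
  then obtain w1 w2 where h: "w = w1 @ w2" "Il [b] w1" "Il (replicate (Suc k) b) w2"
    using Il_split[OF Suc(2)] by blast
  obtain e1 e2 where h1: "w1 = e1 @ b # e2" "Dl e1" "Dl e2" using Il_single[OF h(2)] by blast
  have r: "replicate (Suc (Suc k)) b = replicate (Suc k) b @ [b]" by (simp add: replicate_append_same)
  obtain v' e where h2: "w' = v' @ [b] @ e" "Il (replicate (Suc k) b) v'" "Dl e"
    using Il_snoc_inv[OF Suc(3) r] by blast
  have "Il (replicate (Suc k) b) (e2 @ w2)" using Il_DlL h(3) h1(3) by blast
  hence "Kl ((e2 @ w2) @ c # d @ a # v')" using Suc.IH h2(2) Suc(4) by blast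
  hence "Kl (e1 @ b # ((e2 @ w2) @ c # d @ a # v') @ b # e)" using h1(2) h2(3) by (intro Dl_Kl.K2)
  thus ?case using h h1 h2 by simp
qed

lemma Il_rl: assumes j: "1 \<le> j" and il: "Il (rl j) w" shows "Dl w"
proof -
  obtain k where k: "j = Suc k" using j by (cases j) auto
  have "rl j = [a] @ (replicate j b @ ([c] @ ([a] @ (replicate j b @ [c]))))" by (simp add: rl_def xw_def)
  then obtain w1 r1 where s1: "w = w1 @ r1" "Il [a] w1" "Il (replicate j b @ ([c] @ ([a] @ (replicate j b @ [c])))) r1"
    using Il_split[OF il] by blast
  then obtain w2 r2 where s2: "r1 = w2 @ r2" "Il (replicate j b) w2" "Il ([c] @ ([a] @ (replicate j b @ [c]))) r2"
    using Il_split by blast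
  then obtain w3 r3 where s3: "r2 = w3 @ r3" "Il [c] w3" "Il ([a] @ (replicate j b @ [c])) r3"
    using Il_split by blast
  then obtain w4 r4 where s4: "r3 = w4 @ r4" "Il [a] w4" "Il (replicate j b @ [c]) r4"
    using Il_split by blast
  then obtain w5 w6 where s5: "r4 = w5 @ w6" "Il (replicate j b) w5" "Il [c] w6"
    using Il_split by blast
  obtain e1 e1' where t1: "w1 = e1 @ a # e1'" "Dl e1" "Dl e1'" using Il_single[OF s1(2)] by blast
  obtain e3 e3' where t3: "w3 = e3 @ c # e3'" "Dl e3" "Dl e3'" using Il_single[OF s3(2)] by blast
  obtain e4 e4' where t4: "w4 = e4 @ a # e4'" "Dl e4" "Dl e4'" using Il_single[OF s4(2)] by blast
  obtain e6 e6' where t6: "w6 = e6 @ c # e6'" "Dl e6" "Dl e6'" using Il_single[OF s5(3)] by blast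
  have i1: "Il (replicate (Suc k) b) (e1' @ w2 @ e3)"
    using Il_DlL[OF Il.I2[OF s2(2) t3(2)] t1(3)] k by simp
  have i2: "Il (replicate (Suc k) b) (e4' @ w5 @ e6)"
    using Il_DlL[OF Il.I2[OF s5(2) t6(2)] t4(3)] k by simp
  have "Kl ((e1' @ w2 @ e3) @ c # (e3' @ e4) @ a # (e4' @ w5 @ e6))"
    using Il_KB[OF i1 i2] Dl_Kl.D2[OF t3(3) t4(2)] by blast
  hence "Dl (a # ((e1' @ w2 @ e3) @ c # (e3' @ e4) @ a # (e4' @ w5 @ e6)) @ [c])" by (rule Dl_Kl.D3)
  hence "Dl (e1 @ (a # ((e1' @ w2 @ e3) @ c # (e3' @ e4) @ a # (e4' @ w5 @ e6)) @ [c]) @ e6')"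
    using t1(2) t6(3) Dl_Kl.D2 by blast
  thus ?thesis using s1 s2 s3 s4 s5 t1 t3 t4 t6 by simp
qed

lemma Il_nf: "Il (nf u) u"
proof (induction u rule: rev_induct)
  case Nil thus ?case by (simp add: Il.I0)
next
  case (snoc x u)
  have n: "nf (u @ [x]) = red (nf u) x" by (simp add: nf_def)
  have i: "Il (nf u @ [x]) (u @ [x])" using Il.I1[OF snoc.IH] .
  show ?case
  proof (cases "\<exists>p j. 1 \<le> j \<and> nf u @ [x] = p @ rl j")
    case True
    then obtain p j where pj: "1 \<le> j" "nf u @ [x] = p @ rl j" by blast
    have r: "red (nf u) x = p" using red_remove[OF pj] .
    obtain w1 w2 where "u @ [x] = w1 @ w2" "Il p w1" "Il (rl j) w2"
      using Il_split[OF i pj(2)] by blast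
    moreover have "Dl w2" using Il_rl[OF pj(1)] calculation by blast
    ultimately show ?thesis using n r Il.I2 by metis
  next
    case False
    hence "red (nf u) x = nf u @ [x]" unfolding red_def by auto
    thus ?thesis using n i by simp
  qed
qed

lemma complete: "(u, v) \<in> cg \<Longrightarrow> Pp u v"
  using Il_nf[of u] Il_nf[of v] Il_Pp cong_iff by metis

theorem cf: "context_free (word_problem Pi2_rels)"
  unfolding context_free_def
proof (intro exI[of _ Pg] exI[of _ 0] conjI)
  show "finite Pg" by (simp add: Pg_def)
  show "word_problem Pi2_rels = {w. ([Inl 0], map Inr w) \<in> (cfg_step Pg)\<^sup>*}"
  proof (rule subset_antisym; rule subsetI)
    fix w assume "w \<in> {w. ([Inl 0], map Inr w) \<in> (cfg_step Pg)\<^sup>*}"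
    thus "w \<in> word_problem Pi2_rels" using sound by blast
  next
    fix w assume "w \<in> word_problem Pi2_rels"
    then obtain u v where w: "w = map Gen u @ [Hash] @ rev (map Gen v)" and uv: "(u, v) \<in> cg"
      unfolding word_problem_def by blast
    have "w = map Gen u @ Hash # map Gen (rev v)" using w by (simp add: rev_map)
    thus "w \<in> {w. ([Inl 0], map Inr w) \<in> (cfg_step Pg)\<^sup>*}" using Pp_der[OF complete[OF uv]] by simp
  qed
qed

fun sw :: "abc \<Rightarrow> abc" where "sw a = c" | "sw b = b" | "sw c = a"

definition tau :: "abc list \<Rightarrow> abc list" where "tau w = rev (map sw w)"

lemma sw_sw [simp]: "sw (sw x) = x" by (cases x) auto
lemma tau_app [simp]: "tau (u @ v) = tau v @ tau u" by (simp add: tau_def)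
lemma tau_tau [simp]: "tau (tau w) = w" by (simp add: tau_def rev_map comp_def)
lemma tau_Nil [simp]: "tau [] = []" by (simp add: tau_def)
lemma tau_xw [simp]: "tau (xw k) = xw k" by (simp add: tau_def xw_def)
lemma tau_rl [simp]: "tau (rl k) = rl k" by (simp add: rl_def)

lemma cong_tau: "(u, v) \<in> cg \<Longrightarrow> (tau u, tau v) \<in> cg"
proof (induction rule: pres_cong.induct)
  case (base l r u v)
  then obtain i where "1 \<le> i" "l = rl i" "r = []" by (auto simp: Pi2_iff)
  thus ?case using rl_cong[of i "tau v" "tau u"] by simp
qed (auto intro: pres_cong.intros)

lemma irr_tau: "irr w \<Longrightarrow> irr (tau w)"
  unfolding irr_def
proof (clarify)
  fix p q j assume i: "\<not> (\<exists>p q j. 1 \<le> j \<and> w = p @ rl j @ q)" and h: "1 \<le> j" "tau w = p @ rl j @ q"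
  have "w = tau q @ rl j @ tau p" using arg_cong[OF h(2), of tau] by simp
  thus False using i h(1) by blast
qed

inductive Pl :: "abc list \<Rightarrow> bool" where
  Pl0: "Pl []"
| Pl1: "Pl g \<Longrightarrow> Pl (a # replicate i b @ g)"
| Pl2: "Pl g \<Longrightarrow> 1 \<le> k \<Longrightarrow> Pl (xw k @ g)"

lemma Pl_app: "Pl q \<Longrightarrow> Pl g \<Longrightarrow> Pl (q @ g)"
  by (induction rule: Pl.induct) (auto intro: Pl.intros)

lemma Pl_hd: "Pl g \<Longrightarrow> g \<noteq> [] \<Longrightarrow> \<exists>g'. g = a # g'"
  by (induction rule: Pl.induct) (auto simp: xw_def)

lemma pref_Pl: assumes j: "1 \<le> j" and e: "rl j = q @ r" and q: "q \<noteq> []" and r: "r \<noteq> []"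
  shows "Pl q"
proof -
  have l1: "length (rl j) = length q + length r" using e by simp
  have l2: "length (rl j) = 2 * j + 4" by (simp add: rl_def xw_def)
  have "length r > 0" using r by simp
  hence len: "length q < 2 * j + 4" using l1 l2 by linarith
  obtain m where m: "length q = Suc m" using q by (cases "length q") auto
  have qt: "q = take (Suc m) (rl j)" using e m by simp
  have rlj: "rl j = a # (replicate j b @ c # a # replicate j b @ [c])" by (simp add: rl_def xw_def)
  show ?thesis
  proof (cases "m \<le> j")
    case True
    have "q = a # replicate m b" using qt True by (simp add: rlj)
    thus ?thesis using Pl.Pl1[OF Pl.Pl0, of m] by simp
  next
    case False
    show ?thesis
    proof (cases "m = Suc j")
      case True
      have "q = xw j" using qt True by (simp add: rlj xw_def)
      thus ?thesis using Pl.Pl2[OF Pl.Pl0 j] by simp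
    next
      case False2: False
      obtain n where n: "m = Suc (Suc (j + n))" using False False2
        by (metis add_Suc_right less_imp_Suc_add not_less_eq_eq le_neq_implies_less not_le)
      have nj: "n \<le> j" using len m n by simp
      have "q = xw j @ a # replicate n b" using qt n nj by (simp add: rlj xw_def)
      thus ?thesis using Pl.Pl2[OF Pl.Pl1[OF Pl.Pl0, of n] j] by simp
    qed
  qed
qed


lemma Qlem: "\<exists>s' g h. s = s' @ g \<and> Pl g \<and> foldl red s t = s' @ h"
proof (induction t rule: rev_induct)
  case Nil show ?case apply (rule exI[of _ s], rule exI[of _ "[]"], rule exI[of _ "[]"]) using Pl.Pl0 by simp
next
  case (snoc x t)
  then obtain s' g h where h: "s = s' @ g" "Pl g" "foldl red s t = s' @ h" by blast
  have f: "foldl red s (t @ [x]) = red (s' @ h) x" using h(3) by simp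
  show ?case
  proof (cases "\<exists>p j. 1 \<le> j \<and> (s' @ h) @ [x] = p @ rl j")
    case True
    then obtain p j where pj: "1 \<le> j" "(s' @ h) @ [x] = p @ rl j" by blast
    have r: "red (s' @ h) x = p" using red_remove[OF pj] .
    from pj(2) have "s' @ (h @ [x]) = p @ rl j" by simp
    from append_eq_append_conv2[THEN iffD1, OF this]
    obtain us where us: "(s' = p @ us \<and> us @ (h @ [x]) = rl j) \<or> (s' @ us = p \<and> h @ [x] = us @ rl j)"
      by blast
    show ?thesis
    proof (cases "s' @ us = p \<and> h @ [x] = us @ rl j")
      case True
      have fp: "foldl red s (t @ [x]) = p" by (rule HOL.trans[OF f r])
      have fe: "foldl red s (t @ [x]) = s' @ us" using fp True by metis
      show ?thesis apply (rule exI[of _ s'], rule exI[of _ g], rule exI[of _ us]) using h(1,2) fe by blast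
    next
      case False
      hence us2: "s' = p @ us" "us @ (h @ [x]) = rl j" using us by blast+
      show ?thesis
      proof (cases "us = []")
        case True
        have fp: "foldl red s (t @ [x]) = p" by (rule HOL.trans[OF f r])
        have fe: "foldl red s (t @ [x]) = s' @ []" using fp True us2(1) by simp
        show ?thesis apply (rule exI[of _ s'], rule exI[of _ g], rule exI[of _ "[]"]) using h(1,2) fe by blast
      next
        case False
        have "Pl us" using pref_Pl[OF pj(1) us2(2)[symmetric] False] by simp
        hence "Pl (us @ g)" using Pl_app h(2) by blast
        moreover have "s = p @ (us @ g)" using h(1) us2(1) by simp
        moreover have "foldl red s (t @ [x]) = p @ []" using f r by (metis append_Nil2)
        ultimately show ?thesis apply - apply (rule exI[of _ p], rule exI[of _ "us @ g"], rule exI[of _ "[]"]) by blast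
      qed
    qed
  next
    case False
    hence "red (s' @ h) x = (s' @ h) @ [x]" unfolding red_def by (rule if_not_P)
    hence fe: "foldl red s (t @ [x]) = s' @ (h @ [x])" using f by simp
    show ?thesis apply (rule exI[of _ s'], rule exI[of _ g], rule exI[of _ "h @ [x]"]) using h(1,2) fe by blast
  qed
qed

lemma right_inv: "foldl red s t = [] \<Longrightarrow> Pl s"
  using Qlem[of s t] by auto

inductive Sl :: "abc list \<Rightarrow> bool" where
  Sl0: "Sl []"
| Sl1: "Sl g \<Longrightarrow> Sl (replicate i b @ c # g)"
| Sl2: "Sl g \<Longrightarrow> 1 \<le> k \<Longrightarrow> Sl (xw k @ g)"

lemma Sl_snoc1: "Sl g \<Longrightarrow> Sl (g @ replicate i b @ [c])"
proof (induction rule: Sl.induct)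
  case Sl0 thus ?case using Sl.Sl1[OF Sl.Sl0, of i] by simp
next
  case (Sl1 g i') thus ?case using Sl.Sl1[of "g @ replicate i b @ [c]" i'] by simp
next
  case (Sl2 g k) thus ?case using Sl.Sl2[of "g @ replicate i b @ [c]" k] by simp
qed

lemma Sl_snoc2: "Sl g \<Longrightarrow> 1 \<le> k \<Longrightarrow> Sl (g @ xw k)"
proof (induction rule: Sl.induct)
  case Sl0 thus ?case using Sl.Sl2[OF Sl.Sl0, of k] by simp
next
  case (Sl1 g i') thus ?case using Sl.Sl1[of "g @ xw k" i'] by simp
next
  case (Sl2 g k') thus ?case using Sl.Sl2[of "g @ xw k" k'] by simp
qed

lemma Sl_inv: "Sl s \<Longrightarrow> s = [] \<or> (\<exists>i g. s = replicate i b @ c # g \<and> Sl g) \<or> (\<exists>k g. s = xw k @ g \<and> Sl g \<and> 1 \<le> k)"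
  by (cases rule: Sl.cases) auto

lemma Pl_tau: "Pl w \<Longrightarrow> Sl (tau w)"
proof (induction rule: Pl.induct)
  case Pl0 show ?case by (simp add: Sl.Sl0)
next
  case (Pl1 g i)
  have "tau (a # replicate i b @ g) = tau g @ replicate i b @ [c]" by (simp add: tau_def)
  thus ?case using Sl_snoc1[OF Pl1.IH] by simp
next
  case (Pl2 g k) thus ?case using Sl_snoc2 by simp
qed

inductive Xl :: "nat \<Rightarrow> abc list \<Rightarrow> bool" for L where
  X0: "Xl L []"
| X1: "Xl L g \<Longrightarrow> 1 \<le> k \<Longrightarrow> k \<le> L \<Longrightarrow> Xl L (g @ xw k)"

lemma Xl_cons: "Xl L g \<Longrightarrow> 1 \<le> k \<Longrightarrow> k \<le> L \<Longrightarrow> Xl L (xw k @ g)"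
proof (induction rule: Xl.induct)
  case X0 thus ?case using Xl.X1[OF Xl.X0] by simp
next
  case (X1 g k') thus ?case using Xl.X1[of L "xw k @ g" k'] by simp
qed

lemma Xl_mono: "Xl L g \<Longrightarrow> L \<le> L' \<Longrightarrow> Xl L' g"
  by (induction rule: Xl.induct) (auto intro: Xl.intros)

lemma Xl_inv: "Xl L (p @ xw k) \<Longrightarrow> Xl L p"
  by (cases rule: Xl.cases) (auto dest: xw_uniq)

lemma Xl_xw: "Xl L (xw N) \<Longrightarrow> N \<le> L"
proof -
  assume "Xl L (xw N)"
  thus ?thesis
  proof (cases rule: Xl.cases)
    case X0 thus ?thesis by (simp add: xw_def)
  next
    case (X1 g k)
    hence "[] @ xw N = g @ xw k" by simp
    thus ?thesis using X1 xw_uniq by blast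
  qed
qed

lemma comb: "Pl s \<Longrightarrow> Sl s \<Longrightarrow> \<exists>L. Xl L s"
proof (induction rule: Pl.induct)
  case Pl0 show ?case using Xl.X0 by blast
next
  case (Pl1 g i)
  from Sl_inv[OF Pl1.prems] show ?case
  proof (elim disjE exE conjE)
    assume "a # replicate i b @ g = []" thus ?thesis by simp
  next
    fix i' g' assume "a # replicate i b @ g = replicate i' b @ c # g'"
    thus ?thesis by (cases i') auto
  next
    fix k g' assume "a # replicate i b @ g = xw k @ g'"
    hence e: "replicate i b @ g = replicate k b @ c # g'" by (simp add: xw_def)
    show ?thesis
    proof (cases "g = []")
      case True
      hence "c \<in> set (replicate i b)" using e by (metis append_Nil2 in_set_conv_decomp)
      thus ?thesis by simp
    next
      case False
      then obtain g'' where "g = a # g''" using Pl_hd[OF Pl1.hyps] by blast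
      hence "replicate i b @ a # g'' = replicate k b @ c # g'" using e by simp
      from repl_eq[OF _ _ this] show ?thesis by simp
    qed
  qed
next
  case (Pl2 g k)
  from Sl_inv[OF Pl2.prems] show ?case
  proof (elim disjE exE conjE)
    assume "xw k @ g = []" thus ?thesis by (simp add: xw_def)
  next
    fix i' g' assume "xw k @ g = replicate i' b @ c # g'"
    thus ?thesis by (cases i') (auto simp: xw_def)
  next
    fix k' g' assume h: "xw k @ g = xw k' @ g'" "Sl g'"
    hence "replicate k b @ c # g = replicate k' b @ c # g'" by (simp add: xw_def)
    from repl_eq[OF _ _ this] have "g = g'" by simp
    hence "Sl g" using h by simp
    then obtain L where "Xl L g" using Pl2.IH by blast
    hence "Xl (max L k) g" using Xl_mono by force
    hence "Xl (max L k) (xw k @ g)" using Xl_cons Pl2.hyps(2) by simp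
    thus ?thesis by blast
  qed
qed

definition cls :: "abc list \<Rightarrow> abc list set" where "cls u = cg `` {u}"

abbreviation M :: "abc list set monoid" where "M \<equiv> pres_monoid Pi2_rels"

lemma cg_equiv: "equiv UNIV cg" by (rule cong_equiv)

lemma cls_eq: "cls u = cls v \<longleftrightarrow> (u, v) \<in> cg"
  unfolding cls_def using equiv_class_eq_iff[OF cg_equiv] by auto

lemma carrier_M: "carrier M = UNIV // cg" by (simp add: pres_monoid_def)

lemma cls_in: "cls u \<in> carrier M" unfolding carrier_M cls_def by (rule quotientI) simp

lemma carrier_cls: "X \<in> carrier M \<Longrightarrow> \<exists>u. X = cls u"
  unfolding carrier_M cls_def by (erule quotientE) blast

lemma some_cls: "(u, SOME x. x \<in> cls u) \<in> cg"
proof -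
  have "u \<in> cls u" unfolding cls_def by (simp add: pres_cong.refl)
  hence "(SOME x. x \<in> cls u) \<in> cls u" by (rule someI)
  thus ?thesis unfolding cls_def by simp
qed

lemma mult_cls: "cls u \<otimes>\<^bsub>M\<^esub> cls v = cls (u @ v)"
proof -
  have "((SOME x. x \<in> cls u) @ (SOME x. x \<in> cls v), u @ v) \<in> cg"
    using cong_concat[OF some_cls[of u, THEN pres_cong.sym] some_cls[of v, THEN pres_cong.sym]] .
  hence "cls ((SOME x. x \<in> cls u) @ (SOME x. x \<in> cls v)) = cls (u @ v)" using cls_eq by blast
  thus ?thesis by (simp add: pres_monoid_def cls_def)
qed

lemma one_M: "\<one>\<^bsub>M\<^esub> = cls []" by (simp add: pres_monoid_def cls_def)

lemma monoid_M: "monoid M"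
proof (rule monoidI)
  fix x y assume h: "x \<in> carrier M" "y \<in> carrier M"
  obtain u where "x = cls u" using carrier_cls[OF h(1)] by blast
  moreover obtain v where "y = cls v" using carrier_cls[OF h(2)] by blast
  ultimately show "x \<otimes>\<^bsub>M\<^esub> y \<in> carrier M" by (simp add: mult_cls cls_in)
next
  show "\<one>\<^bsub>M\<^esub> \<in> carrier M" by (simp add: one_M cls_in)
next
  fix x y z assume h: "x \<in> carrier M" "y \<in> carrier M" "z \<in> carrier M"
  obtain u where "x = cls u" using carrier_cls[OF h(1)] by blast
  moreover obtain v where "y = cls v" using carrier_cls[OF h(2)] by blast
  moreover obtain w where "z = cls w" using carrier_cls[OF h(3)] by blast
  ultimately
  show "x \<otimes>\<^bsub>M\<^esub> y \<otimes>\<^bsub>M\<^esub> z = x \<otimes>\<^bsub>M\<^esub> (y \<otimes>\<^bsub>M\<^esub> z)" by (simp add: mult_cls)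
next
  fix x assume "x \<in> carrier M"
  then obtain u where "x = cls u" using carrier_cls by blast
  thus "\<one>\<^bsub>M\<^esub> \<otimes>\<^bsub>M\<^esub> x = x" by (simp add: mult_cls one_M)
next
  fix x assume "x \<in> carrier M"
  then obtain u where "x = cls u" using carrier_cls by blast
  thus "x \<otimes>\<^bsub>M\<^esub> \<one>\<^bsub>M\<^esub> = x" by (simp add: mult_cls one_M)
qed

definition nfc :: "abc list set \<Rightarrow> abc list" where "nfc X = nf (SOME x. x \<in> X)"

lemma nfc_cls: "nfc (cls u) = nf u"
  unfolding nfc_def using some_cls[of u] cong_iff by metis

lemma nf_tau: "nf (tau u) = tau (nf u)"
proof -
  have "(tau u, tau (nf u)) \<in> cg" by (rule cong_tau[OF cong_nf])
  hence "nf (tau u) = nf (tau (nf u))" using cong_iff by blast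
  also have "\<dots> = tau (nf u)" by (rule nf_irr[OF irr_tau[OF irr_nf]])
  finally show ?thesis .
qed

lemma unit_Xl: assumes "X \<in> Units M" shows "\<exists>L. Xl L (nfc X)"
proof -
  from assms obtain Y where X: "X \<in> carrier M" and Y: "Y \<in> carrier M"
    and e1: "Y \<otimes>\<^bsub>M\<^esub> X = \<one>\<^bsub>M\<^esub>" and e2: "X \<otimes>\<^bsub>M\<^esub> Y = \<one>\<^bsub>M\<^esub>"
    unfolding Units_def by blast
  obtain u v where u: "X = cls u" and v: "Y = cls v" using X Y carrier_cls by blast
  have uv: "(u @ v, []) \<in> cg" using e2 u v cls_eq by (simp add: mult_cls one_M)
  have vu: "(v @ u, []) \<in> cg" using e1 u v cls_eq by (simp add: mult_cls one_M)
  have "nf (u @ v) = []" using nf_cong[OF uv] by simp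
  hence "foldl red (nf u) v = []" by (simp add: nf_app)
  hence p1: "Pl (nf u)" by (rule right_inv)
  have "(tau u @ tau v, []) \<in> cg" using cong_tau[OF vu] by simp
  hence "nf (tau u @ tau v) = []" using nf_cong by fastforce
  hence "foldl red (nf (tau u)) (tau v) = []" by (simp add: nf_app)
  hence "Pl (nf (tau u))" by (rule right_inv)
  hence "Pl (tau (nf u))" by (simp add: nf_tau)
  hence "Sl (nf u)" using Pl_tau by fastforce
  thus ?thesis using comb p1 u nfc_cls by simp
qed

lemma Xl_fold: "Xl L t \<Longrightarrow> irr s \<Longrightarrow> Xl L s \<Longrightarrow> Xl L (foldl red s t)"
proof (induction rule: Xl.induct)
  case X0 thus ?case by simp
next
  case (X1 g k)
  define s1 where "s1 = foldl red s g"
  have i: "irr s1" "Xl L s1" using X1 s1_def by auto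
  have e: "foldl red s (g @ xw k) = foldl red s1 (xw k)" by (simp add: s1_def)
  show ?case
  proof (cases "\<exists>p. s1 = p @ xw k")
    case True
    then obtain p where p: "s1 = p @ xw k" by blast
    have "foldl red s1 (xw k) = p" using fold_xw_rem[OF X1(2)] p by simp
    thus ?thesis using e Xl_inv i(2) p by simp
  next
    case False
    hence "foldl red s1 (xw k) = s1 @ xw k" using fold_xw_add[OF X1(2)] by blast
    thus ?thesis using e Xl.X1[OF i(2) X1(2,3)] by simp
  qed
qed

lemma irr_xw: "irr (xw N)"
  unfolding irr_def
proof
  assume "\<exists>p q j. 1 \<le> j \<and> xw N = p @ rl j @ q"
  then obtain p q j where h: "xw N = p @ rl j @ q" by blast
  have "length (filter (\<lambda>x. x = a) (xw N)) = 1" by (simp add: xw_def filter_replicate)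
  moreover have "length (filter (\<lambda>x. x = a) (p @ rl j @ q)) \<ge> 2" by (simp add: rl_def xw_def filter_replicate)
  ultimately show False using h by simp
qed

lemma xw_unit: assumes "1 \<le> N" shows "cls (xw N) \<in> Units M"
proof -
  have e: "cls (xw N) \<otimes>\<^bsub>M\<^esub> cls (xw N) = \<one>\<^bsub>M\<^esub>"
    using rl_cong[OF assms, of "[]" "[]"] by (simp add: mult_cls one_M cls_eq rl_def)
  show ?thesis unfolding Units_def using e cls_in by blast
qed

theorem not_fg:
  "\<not> (\<exists>F. finite F \<and> F \<subseteq> carrier (units_of M) \<and> generate (units_of M) F = carrier (units_of M))"
proof
  assume "\<exists>F. finite F \<and> F \<subseteq> carrier (units_of M) \<and> generate (units_of M) F = carrier (units_of M)"
  then obtain F where fin: "finite F" and sub: "F \<subseteq> carrier (units_of M)"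
    and gen: "generate (units_of M) F = carrier (units_of M)" by blast
  interpret mon: monoid M by (rule monoid_M)
  interpret grp: group "units_of M" by (rule mon.units_group)
  have cU: "carrier (units_of M) = Units M" by (rule units_of_carrier)
  define S where "S = F \<union> (\<lambda>h. inv\<^bsub>units_of M\<^esub> h) ` F"
  have finS: "finite S" using fin by (simp add: S_def)
  have subS: "S \<subseteq> Units M"
  proof -
    have "inv\<^bsub>units_of M\<^esub> h \<in> Units M" if "h \<in> F" for h
      using grp.inv_closed[of h] sub that cU by auto
    thus ?thesis using sub cU unfolding S_def by auto
  qed
  define Lf where "Lf X = (SOME L. Xl L (nfc X))" for X
  have Lf: "Xl (Lf X) (nfc X)" if "X \<in> S" for X
    unfolding Lf_def using unit_Xl[of X] subS that by (meson someI_ex subsetD)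
  define L where "L = Max (insert 0 (Lf ` S))"
  have LfL: "Lf X \<le> L" if "X \<in> S" for X
    unfolding L_def using finS that by (intro Max_ge) auto
  have XS: "Xl L (nfc X)" if "X \<in> S" for X using Lf[OF that] LfL[OF that] Xl_mono by blast
  have main: "X \<in> Units M \<and> Xl L (nfc X)" if "X \<in> generate (units_of M) F" for X
    using that
  proof (induction rule: generate.induct)
    case one
    have "\<one>\<^bsub>units_of M\<^esub> = cls []" by (simp add: units_of_one one_M)
    thus ?case using mon.Units_one_closed one_M nfc_cls Xl.X0 by simp
  next
    case (incl h)
    thus ?case using XS[of h] subS unfolding S_def by auto
  next
    case (inv h)
    thus ?case using XS[of "inv\<^bsub>units_of M\<^esub> h"] subS unfolding S_def by auto
  next
    case (eng h1 h2)
    have m: "h1 \<otimes>\<^bsub>units_of M\<^esub> h2 = h1 \<otimes>\<^bsub>M\<^esub> h2" by (simp add: units_of_mult)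
    have c: "h1 \<in> carrier M" "h2 \<in> carrier M" using eng.IH mon.Units_closed by auto
    obtain u1 where u1: "h1 = cls u1" using carrier_cls[OF c(1)] by blast
    obtain u2 where u2: "h2 = cls u2" using carrier_cls[OF c(2)] by blast
    note u = u1 u2
    have "nfc (h1 \<otimes>\<^bsub>M\<^esub> h2) = nf (u1 @ u2)" by (simp add: u mult_cls nfc_cls)
    also have "\<dots> = foldl red (nf u1) u2" by (rule nf_app)
    also have "\<dots> = foldl red (nf u1) (nf u2)" by (rule fold_repl[OF irr_nf]) (simp add: nf_irr irr_nf)
    finally have e: "nfc (h1 \<otimes>\<^bsub>M\<^esub> h2) = foldl red (nf u1) (nf u2)" .
    have "Xl L (nf u1)" "Xl L (nf u2)" using eng.IH u nfc_cls by auto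
    hence "Xl L (nfc (h1 \<otimes>\<^bsub>M\<^esub> h2))" using e Xl_fold irr_nf by simp
    moreover have "h1 \<otimes>\<^bsub>M\<^esub> h2 \<in> Units M" using eng.IH by simp
    ultimately show ?case using m by simp
  qed
  have "cls (xw (Suc L)) \<in> generate (units_of M) F" using xw_unit[of "Suc L"] gen cU by simp
  hence "Xl L (nfc (cls (xw (Suc L))))" using main by blast
  hence "Xl L (xw (Suc L))" by (simp add: nfc_cls nf_irr irr_xw)
  thus False using Xl_xw by fastforce
qed

theorem mainTheorem10:
  shows "context_free (word_problem Pi2_rels) \<and>
    \<not> (\<exists>F. finite F \<and> F \<subseteq> carrier (units_of (pres_monoid Pi2_rels)) \<and>
          generate (units_of (pres_monoid Pi2_rels)) F = carrier (units_of (pres_monoid Pi2_rels)))"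
  using cf not_fg by blast

end
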